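(* Let $\mathcal{P}$ be the set of weak orders on a set $\mathcal{A}$, ordered by strictness $\le$. For weak orders $r,s\in\mathcal{P}$, regarded as subsets of $\mathcal{A}\times\mathcal{A}$: (1) $r\le s$ implies $r\subseteq s$; (2) the least upper bound $r\vee s$ in $(\mathcal{P},\le)$ is the transitive closure of $r\cup s$; (3) the greatest lower bound $r\wedge s$ in $(\mathcal{P},\le)$, if it exists, is $r\cap s$.
   Context: A weak order on $\mathcal{A}$ is a transitive and complete relation; it is identified with the set of pairs $(a,b)$ such that $a\preceq b$ ($a$ weakly preferred to $b$). $a\prec b$ (strict preference) means $a\preceq b$ and not $b\preceq a$. Strictness order: $r\le s$ iff every strict preference $a\prec b$ of $s$ is also a strict preference of $r$. *)

theory Defs
  imports Main
begin

text \<open>A weak order on the set A: a transitive and complete relation on A,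
  given as the set of pairs (a,b) with a weakly preferred to b.\<close>
definition weak_order :: "'a set \<Rightarrow> 'a rel \<Rightarrow> bool" where
  "weak_order A r \<longleftrightarrow> r \<subseteq> A \<times> A \<and> trans r \<and>
     (\<forall>a\<in>A. \<forall>b\<in>A. (a, b) \<in> r \<or> (b, a) \<in> r)"

definition strict_part :: "'a rel \<Rightarrow> 'a rel" where
  "strict_part r = {(a, b). (a, b) \<in> r \<and> (b, a) \<notin> r}"

text \<open>Strictness order: r \<le> s iff every strict preference of s is one of r.\<close>
definition stricter :: "'a rel \<Rightarrow> 'a rel \<Rightarrow> bool" where
  "stricter r s \<longleftrightarrow> strict_part s \<subseteq> strict_part r"

definition is_lub :: "'a set \<Rightarrow> 'a rel \<Rightarrow> 'a rel \<Rightarrow> 'a rel \<Rightarrow> bool" where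
  "is_lub A r s u \<longleftrightarrow> weak_order A u \<and> stricter r u \<and> stricter s u \<and>
     (\<forall>v. weak_order A v \<and> stricter r v \<and> stricter s v \<longrightarrow> stricter u v)"

definition is_glb :: "'a set \<Rightarrow> 'a rel \<Rightarrow> 'a rel \<Rightarrow> 'a rel \<Rightarrow> bool" where
  "is_glb A r s g \<longleftrightarrow> weak_order A g \<and> stricter g r \<and> stricter g s \<and>
     (\<forall>v. weak_order A v \<and> stricter v r \<and> stricter v s \<longrightarrow> stricter v g)"

end

theory Submission
  imports Defs
begin

lemma str_sub:
  assumes "weak_order A r" "weak_order A s" "stricter r s"
  shows "r \<subseteq> s"
proof
  fix p assume p: "p \<in> r"
  obtain a b where ab: "p = (a,b)" by (cases p)
  have abA: "a \<in> A" "b \<in> A" using p ab assms(1) unfolding weak_order_def by auto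
  show "p \<in> s"
  proof (rule ccontr)
    assume "p \<notin> s"
    then have "(b,a) \<in> s" using abA ab assms(2) unfolding weak_order_def by auto
    then have "(b,a) \<in> strict_part s" using \<open>p \<notin> s\<close> ab unfolding strict_part_def by auto
    then have "(b,a) \<in> strict_part r" using assms(3) unfolding stricter_def by auto
    then show False using p ab unfolding strict_part_def by auto
  qed
qed

lemma sub_str:
  assumes "weak_order A r" "weak_order A s" "r \<subseteq> s"
  shows "stricter r s"
  unfolding stricter_def strict_part_def
proof clarify
  fix a b assume h: "(a,b) \<in> s" "(b,a) \<notin> s"
  have "a \<in> A" "b \<in> A" using h assms(2) unfolding weak_order_def by auto
  then have "(a,b) \<in> r \<or> (b,a) \<in> r" using assms(1) unfolding weak_order_def by auto
  then show "(a,b) \<in> r \<and> (b,a) \<notin> r" using h assms(3) by auto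
qed

lemma str_iff:
  assumes "weak_order A r" "weak_order A s"
  shows "stricter r s \<longleftrightarrow> r \<subseteq> s"
  using str_sub sub_str assms by blast

lemma wo_trancl:
  assumes "weak_order A r" "weak_order A s"
  shows "weak_order A (trancl (r \<union> s))"
proof -
  have "r \<union> s \<subseteq> A \<times> A" using assms unfolding weak_order_def by auto
  then have "trancl (r \<union> s) \<subseteq> A \<times> A" using trancl_subset_Sigma by blast
  moreover have "r \<subseteq> trancl (r \<union> s)" by auto
  ultimately show ?thesis using assms(1) unfolding weak_order_def
    using trans_trancl by blast
qed

lemma trancl_subset_trans: "trans u \<Longrightarrow> r \<subseteq> u \<Longrightarrow> s \<subseteq> u \<Longrightarrow> (r \<union> s)\<^sup>+ \<subseteq> u"
  by (metis Un_least trancl_id trancl_mono subsetI)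

theorem proposition7:
  fixes A :: "'a set" and r s :: "'a rel"
  assumes "weak_order A r" and "weak_order A s"
  shows "(stricter r s \<longrightarrow> r \<subseteq> s)
     \<and> (\<forall>u. is_lub A r s u \<longleftrightarrow> u = trancl (r \<union> s))
     \<and> (\<forall>g. is_glb A r s g \<longrightarrow> g = r \<inter> s)"
proof (intro conjI allI impI iffI)
  show "stricter r s \<Longrightarrow> r \<subseteq> s" using str_sub assms by blast
next
  let ?t = "trancl (r \<union> s)"
  have wt: "weak_order A ?t" using wo_trancl assms by blast
  {
    fix u assume "is_lub A r s u"
    then have wu: "weak_order A u" and ru: "r \<subseteq> u" and su: "s \<subseteq> u"
      and le: "stricter u ?t"
      unfolding is_lub_def
      using str_iff[OF assms(1)] str_iff[OF assms(2)] str_iff[OF assms(1) wt] str_iff[OF assms(2) wt]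
      by (auto simp: trancl_subset_trans) (meson Un_upper1 Un_upper2 r_into_trancl' subsetI wt)
    have "trans u" using wu unfolding weak_order_def by auto
    then have "?t \<subseteq> u" using ru su by (simp add: trancl_subset_trans)
    moreover have "u \<subseteq> ?t" using le str_iff wu wt by blast
    ultimately show "u = ?t" by blast
  next
    fix u assume uq: "u = ?t"
    have "\<forall>v. weak_order A v \<and> stricter r v \<and> stricter s v \<longrightarrow> stricter ?t v"
    proof clarify
      fix v assume v: "weak_order A v" "stricter r v" "stricter s v"
      have "r \<subseteq> v" "s \<subseteq> v" using v str_iff[OF assms(1) v(1)] str_iff[OF assms(2) v(1)] by auto
      moreover have "trans v" using v unfolding weak_order_def by auto
      ultimately have "?t \<subseteq> v" using trancl_subset_trans by blast
      then show "stricter ?t v" using str_iff[OF wt v(1)] by blast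
    qed
    moreover have "stricter r ?t" "stricter s ?t"
      using str_iff[OF assms(1) wt] str_iff[OF assms(2) wt] by auto
    ultimately show "is_lub A r s u" unfolding is_lub_def using wt uq by blast
  }
next
  fix g assume "is_glb A r s g"
  then have wg: "weak_order A g" and gr: "g \<subseteq> r" and gs: "g \<subseteq> s"
    and mx: "\<forall>v. weak_order A v \<and> stricter v r \<and> stricter v s \<longrightarrow> stricter v g"
    unfolding is_glb_def using str_iff assms by blast+
  have wi: "weak_order A (r \<inter> s)"
    using wg gr gs assms unfolding weak_order_def
    by (auto intro: trans_Int) (blast+)
  have "stricter (r \<inter> s) g"
    using mx wi str_iff[OF wi assms(1)] str_iff[OF wi assms(2)] by blast
  then have "r \<inter> s \<subseteq> g" using str_iff wi wg by blast
  then show "g = r \<inter> s" using gr gs by blast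
qed

end
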